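(* Let $a^{(1)},\dots,a^{(\ell)}\in\mathbb{F}$ be pairwise non-conjugate, let $K_i=K_{a^{(i)}}$, and for each $i$ let $\beta^{(i)}_1,\dots,\beta^{(i)}_{n_i}\in\mathbb{F}$ be right linearly independent over $K_i$; put $n=n_1+\dots+n_\ell$. For $k\in\{1,\dots,n\}$ let $\mathcal{C}_{L,k}\subseteq\mathbb{F}^n$ be the linearized Reed-Solomon code consisting of all vectors $(\mathbf{c}^{(1)},\dots,\mathbf{c}^{(\ell)})$, $\mathbf{c}^{(i)}\in\mathbb{F}^{n_i}$, with $c^{(i)}_j=\sum_{l=0}^{k-1}F_l\,\mathcal{D}^l_{a^{(i)}}(\beta^{(i)}_j)$ for some $F_0,\dots,F_{k-1}\in\mathbb{F}$. Then $\mathcal{C}_{L,k}$ is a $k$-dimensional left linear code with $\mathrm{d_{SR}}(\mathcal{C}_{L,k})=n-k+1$, where $\mathrm{d_{SR}}$ is the sum-rank distance with lengths $(n_1,\dots,n_\ell)$ and division subrings $(K_1,\dots,K_\ell)$; i.e. it is a maximum sum-rank distance code.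
   Context: $\mathbb{F}$ is a division ring, $\sigma$ a ring endomorphism of $\mathbb{F}$, $\delta$ a $\sigma$-derivation ($\delta$ additive, $\delta(ab)=\sigma(a)\delta(b)+\delta(a)b$). For $a\in\mathbb{F}$, $\mathcal{D}_a(b)=\sigma(b)a+\delta(b)$, $\mathcal{D}_a^l$ is its $l$-fold composition ($\mathcal{D}_a^0=\mathrm{Id}$), $K_a=\{b\in\mathbb{F}:\mathcal{D}_a(b)=ab\}$ (a division subring), and $a,c$ are conjugate if $c=\mathcal{D}_a(b)b^{-1}$ for some $b\in\mathbb{F}^*$. Sum-rank weight: $\mathrm{wt_{SR}}(\mathbf{c})=\sum_i\dim_{K_i}\langle c^{(i)}_1,\dots,c^{(i)}_{n_i}\rangle^R_{K_i}$ (right $K_i$-spans), $\mathrm{d_{SR}}(\mathbf{c},\mathbf{d})=\mathrm{wt_{SR}}(\mathbf{c}-\mathbf{d})$, and $\mathrm{d_{SR}}(\mathcal{C})$ is the minimum over distinct codewords. *)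

theory Defs
  imports Main
begin

text \<open>Vectors of F^n with block structure (n_1,...,n_l) are functions c :: nat => nat => 'a,
  c i j being the j-th entry of block i (i < l, j < n_i), and 0 outside this index range.\<close>

definition ring_endo :: "('a::division_ring \<Rightarrow> 'a) \<Rightarrow> bool" where
  "ring_endo \<sigma> \<longleftrightarrow> \<sigma> 1 = 1 \<and> (\<forall>x y. \<sigma> (x + y) = \<sigma> x + \<sigma> y) \<and> (\<forall>x y. \<sigma> (x * y) = \<sigma> x * \<sigma> y)"

definition sigma_derivation :: "('a::division_ring \<Rightarrow> 'a) \<Rightarrow> ('a \<Rightarrow> 'a) \<Rightarrow> bool" where
  "sigma_derivation \<sigma> \<delta> \<longleftrightarrow> (\<forall>x y. \<delta> (x + y) = \<delta> x + \<delta> y) \<and>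
     (\<forall>x y. \<delta> (x * y) = \<sigma> x * \<delta> y + \<delta> x * y)"

definition Dop :: "('a::division_ring \<Rightarrow> 'a) \<Rightarrow> ('a \<Rightarrow> 'a) \<Rightarrow> 'a \<Rightarrow> 'a \<Rightarrow> 'a" where
  "Dop \<sigma> \<delta> a b = \<sigma> b * a + \<delta> b"

definition Kset :: "('a::division_ring \<Rightarrow> 'a) \<Rightarrow> ('a \<Rightarrow> 'a) \<Rightarrow> 'a \<Rightarrow> 'a set" where
  "Kset \<sigma> \<delta> a = {b. Dop \<sigma> \<delta> a b = a * b}"

definition conjugate :: "('a::division_ring \<Rightarrow> 'a) \<Rightarrow> ('a \<Rightarrow> 'a) \<Rightarrow> 'a \<Rightarrow> 'a \<Rightarrow> bool" where
  "conjugate \<sigma> \<delta> a c \<longleftrightarrow> (\<exists>b. b \<noteq> 0 \<and> c = Dop \<sigma> \<delta> a b * inverse b)"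

definition rindep :: "'a::division_ring set \<Rightarrow> (nat \<Rightarrow> 'a) \<Rightarrow> nat \<Rightarrow> bool" where
  "rindep K v m \<longleftrightarrow> (\<forall>x. (\<forall>j<m. x j \<in> K) \<longrightarrow> (\<Sum>j<m. v j * x j) = 0 \<longrightarrow> (\<forall>j<m. x j = 0))"

definition rspan :: "'a::division_ring set \<Rightarrow> (nat \<Rightarrow> 'a) \<Rightarrow> nat \<Rightarrow> 'a set" where
  "rspan K v m = {(\<Sum>j<m. v j * x j) | x. \<forall>j<m. x j \<in> K}"

definition rdim :: "'a::division_ring set \<Rightarrow> 'a set \<Rightarrow> nat" where
  "rdim K V = Max {m. \<exists>v. (\<forall>j<m. v j \<in> V) \<and> rindep K v m}"

definition in_space :: "nat \<Rightarrow> (nat \<Rightarrow> nat) \<Rightarrow> (nat \<Rightarrow> nat \<Rightarrow> 'a::zero) \<Rightarrow> bool" where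
  "in_space l nn c \<longleftrightarrow> (\<forall>i j. \<not> (i < l \<and> j < nn i) \<longrightarrow> c i j = 0)"

definition wtSR :: "nat \<Rightarrow> (nat \<Rightarrow> nat) \<Rightarrow> (nat \<Rightarrow> 'a::division_ring set) \<Rightarrow> (nat \<Rightarrow> nat \<Rightarrow> 'a) \<Rightarrow> nat" where
  "wtSR l nn K c = (\<Sum>i<l. rdim (K i) (rspan (K i) (c i) (nn i)))"

definition dSR :: "nat \<Rightarrow> (nat \<Rightarrow> nat) \<Rightarrow> (nat \<Rightarrow> 'a::division_ring set) \<Rightarrow> (nat \<Rightarrow> nat \<Rightarrow> 'a) \<Rightarrow> (nat \<Rightarrow> nat \<Rightarrow> 'a) \<Rightarrow> nat" where
  "dSR l nn K c d = wtSR l nn K (\<lambda>i j. c i j - d i j)"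

definition dSR_code :: "nat \<Rightarrow> (nat \<Rightarrow> nat) \<Rightarrow> (nat \<Rightarrow> 'a::division_ring set) \<Rightarrow> (nat \<Rightarrow> nat \<Rightarrow> 'a) set \<Rightarrow> nat" where
  "dSR_code l nn K C = Inf {dSR l nn K c d | c d. c \<in> C \<and> d \<in> C \<and> c \<noteq> d}"

definition left_linear_code :: "nat \<Rightarrow> (nat \<Rightarrow> nat) \<Rightarrow> (nat \<Rightarrow> nat \<Rightarrow> 'a::division_ring) set \<Rightarrow> bool" where
  "left_linear_code l nn C \<longleftrightarrow> (\<forall>c\<in>C. in_space l nn c) \<and> (\<lambda>i j. 0) \<in> C \<and>
     (\<forall>c\<in>C. \<forall>d\<in>C. (\<lambda>i j. c i j + d i j) \<in> C) \<and>
     (\<forall>x. \<forall>c\<in>C. (\<lambda>i j. x * c i j) \<in> C)"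

definition lindep_vec :: "(nat \<Rightarrow> nat \<Rightarrow> nat \<Rightarrow> 'a::division_ring) \<Rightarrow> nat \<Rightarrow> bool" where
  "lindep_vec v m \<longleftrightarrow> (\<forall>x. (\<lambda>i j. \<Sum>t<m. x t * v t i j) = (\<lambda>i j. 0) \<longrightarrow> (\<forall>t<m. x t = 0))"

definition ldim :: "(nat \<Rightarrow> nat \<Rightarrow> 'a::division_ring) set \<Rightarrow> nat" where
  "ldim C = Max {m. \<exists>v. (\<forall>t<m. v t \<in> C) \<and> lindep_vec v m}"

definition LRS_code :: "('a::division_ring \<Rightarrow> 'a) \<Rightarrow> ('a \<Rightarrow> 'a) \<Rightarrow> nat \<Rightarrow> (nat \<Rightarrow> nat) \<Rightarrow>
    (nat \<Rightarrow> 'a) \<Rightarrow> (nat \<Rightarrow> nat \<Rightarrow> 'a) \<Rightarrow> nat \<Rightarrow> (nat \<Rightarrow> nat \<Rightarrow> 'a) set" where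
  "LRS_code \<sigma> \<delta> l nn a \<beta> k =
     {(\<lambda>i j. if i < l \<and> j < nn i then (\<Sum>t<k. F t * (Dop \<sigma> \<delta> (a i) ^^ t) (\<beta> i j)) else 0) | F. True}"

end

theory Submission
  imports Defs
begin



definition subdiv :: "'a::division_ring set \<Rightarrow> bool" where
  "subdiv K \<longleftrightarrow> 0 \<in> K \<and> 1 \<in> K \<and> (\<forall>x\<in>K. \<forall>y\<in>K. x + y \<in> K \<and> x * y \<in> K) \<and>
     (\<forall>x\<in>K. - x \<in> K \<and> inverse x \<in> K)"

lemma subdiv_sum: "subdiv K \<Longrightarrow> (\<And>x. x \<in> A \<Longrightarrow> f x \<in> K) \<Longrightarrow> sum f A \<in> K"
proof (induction A rule: infinite_finite_induct)
  case (infinite A) then show ?case by (simp add: subdiv_def)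
next
  case empty then show ?case by (simp add: subdiv_def)
next
  case (insert x F) then show ?case by (simp add: subdiv_def)
qed

lemma subdiv_diff: "subdiv K \<Longrightarrow> x \<in> K \<Longrightarrow> y \<in> K \<Longrightarrow> x - y \<in> K"
  by (metis diff_conv_add_uminus subdiv_def)

lemma gauss_right:
  assumes "finite E" "subdiv K"
  shows "finite U \<Longrightarrow> card E < card U \<Longrightarrow> (\<forall>t\<in>U. \<forall>e\<in>E. A t e \<in> K) \<Longrightarrow>
    \<exists>z. (\<forall>t\<in>U. z t \<in> K) \<and> (\<exists>t\<in>U. z t \<noteq> 0) \<and> (\<forall>e\<in>E. (\<Sum>t\<in>U. A t e * z t) = 0)"
  using assms(1)
proof (induction E arbitrary: U A rule: finite_induct)
  case empty
  then obtain t where "t \<in> U" by fastforce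
  then show ?case using \<open>subdiv K\<close> by (intro exI[of _ "\<lambda>_. 1"]) (auto simp: subdiv_def)
next
  case (insert e E)
  show ?case
  proof (cases "\<forall>t\<in>U. A t e = 0")
    case True
    have "card E < card U" using insert by simp
    from insert.IH[of U A, OF insert.prems(1) this] insert.prems(3)
    obtain z where "\<forall>t\<in>U. z t \<in> K" "\<exists>t\<in>U. z t \<noteq> 0" "\<forall>e\<in>E. (\<Sum>t\<in>U. A t e * z t) = 0"
      by auto
    then show ?thesis using True by (intro exI[of _ z]) auto
  next
    case False
    then obtain t0 where t0: "t0 \<in> U" "A t0 e \<noteq> 0" by auto
    define c where "c = A t0 e"
    define U' where "U' = U - {t0}"
    define A' where "A' t e' = A t e' - A t0 e' * inverse c * A t e" for t e'
    have fU': "finite U'" using insert by (simp add: U'_def)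
    have cU': "card E < card U'" using insert t0 by (simp add: U'_def)
    have cK: "c \<in> K" using insert.prems(3) t0 by (simp add: c_def)
    have A'K: "\<forall>t\<in>U'. \<forall>e\<in>E. A' t e \<in> K"
      using insert.prems(3) t0 cK \<open>subdiv K\<close> unfolding A'_def U'_def
      by (auto intro!: subdiv_diff simp: subdiv_def)
    from insert.IH[of U' A', OF fU' cU' A'K] obtain y where
      y: "\<forall>t\<in>U'. y t \<in> K" "\<exists>t\<in>U'. y t \<noteq> 0" "\<forall>e\<in>E. (\<Sum>t\<in>U'. A' t e * y t) = 0" by blast
    define S where "S e' = (\<Sum>u\<in>U'. A u e' * y u)" for e'
    define z where "z t = (if t = t0 then - (inverse c * S e) else y t)" for t
    have SK: "S e \<in> K" unfolding S_def
      using y(1) insert.prems(3) \<open>subdiv K\<close> by (intro subdiv_sum) (auto simp: U'_def subdiv_def)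
    have zK: "\<forall>t\<in>U. z t \<in> K" using y(1) SK cK \<open>subdiv K\<close>
      by (auto simp: z_def U'_def subdiv_def)
    have znz: "\<exists>t\<in>U. z t \<noteq> 0" using y(2) by (auto simp: z_def U'_def)
    have split: "(\<Sum>t\<in>U. A t e' * z t) = A t0 e' * z t0 + S e'" for e'
    proof -
      have "(\<Sum>t\<in>U. A t e' * z t) = A t0 e' * z t0 + (\<Sum>t\<in>U'. A t e' * z t)"
        using t0 insert.prems(1) by (simp add: U'_def sum.remove)
      also have "(\<Sum>t\<in>U'. A t e' * z t) = S e'"
        unfolding S_def by (rule sum.cong) (auto simp: z_def U'_def)
      finally show ?thesis .
    qed
    have eq_e: "(\<Sum>t\<in>U. A t e * z t) = 0"
      unfolding split using t0 by (simp add: z_def c_def[symmetric] mult.assoc[symmetric])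
    have eq_E: "(\<Sum>t\<in>U. A t e' * z t) = 0" if "e' \<in> E" for e'
    proof -
      have "(\<Sum>t\<in>U'. A' t e' * y t) = S e' - A t0 e' * inverse c * S e"
        unfolding A'_def S_def
        by (simp add: algebra_simps sum_subtractf sum_distrib_left mult.assoc)
      then have "S e' - A t0 e' * inverse c * S e = 0" using y(3) that by simp
      then show ?thesis unfolding split by (simp add: z_def mult.assoc)
    qed
    show ?thesis using zK znz eq_e eq_E by (intro exI[of _ z]) auto
  qed
qed

lemma gauss_left:
  assumes "finite E"
  shows "finite U \<Longrightarrow> card E < card U \<Longrightarrow>
    \<exists>z. (\<exists>t\<in>U. z t \<noteq> (0::'a::division_ring)) \<and> (\<forall>e\<in>E. (\<Sum>t\<in>U. z t * A t e) = 0)"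
  using assms(1)
proof (induction E arbitrary: U A rule: finite_induct)
  case empty
  then obtain t where "t \<in> U" by fastforce
  then show ?case by (intro exI[of _ "\<lambda>_. 1"]) auto
next
  case (insert e E)
  show ?case
  proof (cases "\<forall>t\<in>U. A t e = 0")
    case True
    have "card E < card U" using insert by simp
    from insert.IH[of U A, OF insert.prems(1) this]
    obtain z where "\<exists>t\<in>U. z t \<noteq> 0" "\<forall>e\<in>E. (\<Sum>t\<in>U. z t * A t e) = 0"
      by auto
    then show ?thesis using True by (intro exI[of _ z]) auto
  next
    case False
    then obtain t0 where t0: "t0 \<in> U" "A t0 e \<noteq> 0" by auto
    define c where "c = A t0 e"
    define U' where "U' = U - {t0}"
    define A' where "A' t e' = A t e' - A t e * inverse c * A t0 e'" for t e'
    have fU': "finite U'" using insert by (simp add: U'_def)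
    have cU': "card E < card U'" using insert t0 by (simp add: U'_def)
    from insert.IH[of U' A', OF fU' cU'] obtain y where
      y: "\<exists>t\<in>U'. y t \<noteq> 0" "\<forall>e\<in>E. (\<Sum>t\<in>U'. y t * A' t e) = 0" by blast
    define S where "S e' = (\<Sum>u\<in>U'. y u * A u e')" for e'
    define z where "z t = (if t = t0 then - (S e * inverse c) else y t)" for t
    have znz: "\<exists>t\<in>U. z t \<noteq> 0" using y(1) by (auto simp: z_def U'_def)
    have split: "(\<Sum>t\<in>U. z t * A t e') = z t0 * A t0 e' + S e'" for e'
    proof -
      have "(\<Sum>t\<in>U. z t * A t e') = z t0 * A t0 e' + (\<Sum>t\<in>U'. z t * A t e')"
        using t0 insert.prems(1) by (simp add: U'_def sum.remove)
      also have "(\<Sum>t\<in>U'. z t * A t e') = S e'"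
        unfolding S_def by (rule sum.cong) (auto simp: z_def U'_def)
      finally show ?thesis .
    qed
    have eq_e: "(\<Sum>t\<in>U. z t * A t e) = 0"
      unfolding split using t0 by (simp add: z_def c_def[symmetric] mult.assoc)
    have eq_E: "(\<Sum>t\<in>U. z t * A t e') = 0" if "e' \<in> E" for e'
    proof -
      have "(\<Sum>t\<in>U'. y t * A' t e') = S e' - S e * inverse c * A t0 e'"
        unfolding A'_def S_def
        by (simp add: algebra_simps sum_subtractf sum_distrib_right mult.assoc)
      then have "S e' - S e * inverse c * A t0 e' = 0" using y(2) that by simp
      then show ?thesis unfolding split by (simp add: z_def mult.assoc)
    qed
    show ?thesis using znz eq_e eq_E by (intro exI[of _ z]) auto
  qed
qed




lemma rspan_zero: "subdiv K \<Longrightarrow> 0 \<in> rspan K v n"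
  unfolding rspan_def by (rule CollectI, rule exI[of _ "\<lambda>_. 0"]) (auto simp: subdiv_def)

lemma rspan_add: "subdiv K \<Longrightarrow> x \<in> rspan K v n \<Longrightarrow> y \<in> rspan K v n \<Longrightarrow> x + y \<in> rspan K v n"
  unfolding rspan_def
proof safe
  fix x y :: "nat \<Rightarrow> 'a"
  assume "subdiv K" "\<forall>j<n. x j \<in> K" "\<forall>j<n. y j \<in> K"
  then show "\<exists>xa. (\<Sum>j<n. v j * x j) + (\<Sum>j<n. v j * y j) = (\<Sum>j<n. v j * xa j) \<and> (\<forall>j<n. xa j \<in> K)"
    by (intro exI[of _ "\<lambda>j. x j + y j"]) (auto simp: subdiv_def distrib_left sum.distrib)
qed

lemma rspan_smult: "subdiv K \<Longrightarrow> x \<in> rspan K v n \<Longrightarrow> z \<in> K \<Longrightarrow> x * z \<in> rspan K v n"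
  unfolding rspan_def
proof safe
  fix x :: "nat \<Rightarrow> 'a"
  assume "subdiv K" "\<forall>j<n. x j \<in> K" "z \<in> K"
  then show "\<exists>xa. (\<Sum>j<n. v j * x j) * z = (\<Sum>j<n. v j * xa j) \<and> (\<forall>j<n. xa j \<in> K)"
    by (intro exI[of _ "\<lambda>j. x j * z"]) (auto simp: subdiv_def sum_distrib_right mult.assoc)
qed

lemma rspan_comb: "subdiv K \<Longrightarrow> (\<forall>s<(q::nat). u s \<in> rspan K v n) \<Longrightarrow> (\<forall>s<q. z s \<in> K) \<Longrightarrow>
   (\<Sum>s<q. u s * z s) \<in> rspan K v n"
  by (induction q) (auto intro!: rspan_add rspan_smult rspan_zero)

lemma rspan_gen: "subdiv K \<Longrightarrow> j < n \<Longrightarrow> v j \<in> rspan K v n"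
  unfolding rspan_def
  by (rule CollectI, rule exI[of _ "\<lambda>i. if i = j then 1 else 0"])
     (auto simp: subdiv_def if_distrib[of "\<lambda>x. _ * x"] sum.delta' cong: if_cong)

lemma rspan_mono: "subdiv K \<Longrightarrow> n \<le> n' \<Longrightarrow> rspan K v n \<subseteq> rspan K v n'"
proof
  fix w assume K: "subdiv K" and nn: "n \<le> n'" and "w \<in> rspan K v n"
  then obtain x where x: "\<forall>j<n. x j \<in> K" "w = (\<Sum>j<n. v j * x j)" unfolding rspan_def by auto
  have "w = (\<Sum>j<n'. v j * (if j < n then x j else 0))"
    unfolding x(2) using nn by (intro sum.mono_neutral_cong_left) auto
  moreover have "\<forall>j<n'. (if j < n then x j else 0) \<in> K" using x K by (auto simp: subdiv_def)
  ultimately show "w \<in> rspan K v n'" unfolding rspan_def by (intro CollectI exI[of _ "\<lambda>j. if j < n then x j else 0"]) simp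
qed

lemma rspan_cong: "(\<And>j. j < n \<Longrightarrow> v j = w j) \<Longrightarrow> rspan K v n = rspan K w n"
  unfolding rspan_def by (metis (no_types, lifting) lessThan_iff sum.cong)

lemma steinitz:
  assumes K: "subdiv K" and u: "\<forall>s<q. u s \<in> rspan K v n" and ind: "rindep K u q"
  shows "q \<le> n"
proof (rule ccontr)
  assume "\<not> q \<le> n"
  then have qn: "card {..<n} < card {..<q}" by simp
  have "\<forall>s<q. \<exists>Y. (\<forall>j<n. Y j \<in> K) \<and> u s = (\<Sum>j<n. v j * Y j)"
    using u unfolding rspan_def by blast
  then obtain Y where Y: "\<forall>s<q. (\<forall>j<n. Y s j \<in> K) \<and> u s = (\<Sum>j<n. v j * Y s j)"
    by metis
  from gauss_right[OF _ K _ qn, of "\<lambda>s j. Y s j"] Y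
  obtain z where z: "\<forall>t\<in>{..<q}. z t \<in> K" "\<exists>t\<in>{..<q}. z t \<noteq> 0" "\<forall>e\<in>{..<n}. (\<Sum>t<q. Y t e * z t) = 0"
    by blast
  have "(\<Sum>s<q. u s * z s) = (\<Sum>s<q. \<Sum>j<n. v j * Y s j * z s)"
    using Y by (simp add: sum_distrib_right)
  also have "\<dots> = (\<Sum>j<n. v j * (\<Sum>s<q. Y s j * z s))"
    by (subst sum.swap) (simp add: sum_distrib_left mult.assoc)
  also have "\<dots> = 0" using z(3) by simp
  finally show False using ind z(1,2) unfolding rindep_def by (meson lessThan_iff)
qed

lemma rdim_facts:
  assumes K: "subdiv K" and V: "V \<subseteq> rspan K v n"
  shows "rdim K V \<le> n" "\<And>q u. (\<forall>s<q. u s \<in> V) \<Longrightarrow> rindep K u q \<Longrightarrow> q \<le> rdim K V"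
proof -
  let ?M = "{m. \<exists>u. (\<forall>j<m. u j \<in> V) \<and> rindep K u m}"
  have bnd: "?M \<subseteq> {..n}" using steinitz[OF K] V by blast
  then have fin: "finite ?M" using finite_subset by blast
  have "0 \<in> ?M" by (auto simp: rindep_def)
  then show "rdim K V \<le> n" unfolding rdim_def using bnd fin by (metis (lifting) Max_in atMost_iff empty_iff subsetD)
  show "q \<le> rdim K V" if "\<forall>s<q. u s \<in> V" "rindep K u q" for q u
    unfolding rdim_def using that fin by (intro Max_ge) auto
qed




lemma relations:
  fixes v :: "nat \<Rightarrow> 'a::division_ring"
  assumes K: "subdiv K"
  shows "\<exists>p X u. p \<le> n \<and> (\<forall>s<p. \<forall>j. X s j \<in> K) \<and> (\<forall>s<p. (\<Sum>j<n. v j * X s j) = 0) \<and>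
    (\<forall>y. (\<forall>s<p. y s \<in> K) \<longrightarrow> (\<forall>j<n. (\<Sum>s<p. X s j * y s) = 0) \<longrightarrow> (\<forall>s<p. y s = 0)) \<and>
    (\<forall>s<n-p. u s \<in> rspan K v n) \<and> rindep K u (n-p)"
proof (induction n)
  case 0
  show ?case by (intro exI[of _ 0]) (auto simp: rindep_def)
next
  case (Suc n)
  then obtain p X u where p: "p \<le> n" and XK: "\<forall>s<p. \<forall>j. X s j \<in> K"
    and Xrel: "\<forall>s<p. (\<Sum>j<n. v j * X s j) = 0"
    and Xind: "\<forall>y. (\<forall>s<p. y s \<in> K) \<longrightarrow> (\<forall>j<n. (\<Sum>s<p. X s j * y s) = 0) \<longrightarrow> (\<forall>s<p. y s = 0)"
    and uV: "\<forall>s<n-p. u s \<in> rspan K v n" and uind: "rindep K u (n-p)" by (elim exE conjE)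
  have uV': "\<forall>s<n-p. u s \<in> rspan K v (Suc n)" using uV rspan_mono[OF K, of n "Suc n" v] by auto
  show ?case
  proof (cases "v n \<in> rspan K v n")
    case True
    then obtain y where y: "\<forall>j<n. y j \<in> K" "v n = (\<Sum>j<n. v j * y j)" unfolding rspan_def by auto
    define X' where "X' s j = (if j < n then (if s < p then X s j else - y j)
       else if j = n \<and> s = p then 1 else 0)" for s j
    have "\<forall>s<Suc p. \<forall>j. X' s j \<in> K" using XK y K by (auto simp: X'_def subdiv_def)
    moreover have "\<forall>s<Suc p. (\<Sum>j<Suc n. v j * X' s j) = 0"
    proof (intro allI impI)
      fix s assume "s < Suc p"
      have "(\<Sum>j<Suc n. v j * X' s j) = (\<Sum>j<n. v j * X' s j) + v n * X' s n" by simp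
      also have "(\<Sum>j<n. v j * X' s j) = (if s < p then (\<Sum>j<n. v j * X s j) else - (\<Sum>j<n. v j * y j))"
      proof (cases "s < p")
        case True
        then show ?thesis by (simp add: X'_def)
      next
        case False
        then have "(\<Sum>j<n. v j * X' s j) = (\<Sum>j<n. - (v j * y j))"
          by (intro sum.cong) (simp_all add: X'_def)
        then show ?thesis using False by (simp add: sum_negf)
      qed
      finally have E: "(\<Sum>j<Suc n. v j * X' s j) = (if s < p then (\<Sum>j<n. v j * X s j) else - (\<Sum>j<n. v j * y j)) + v n * X' s n" .
      show "(\<Sum>j<Suc n. v j * X' s j) = 0"
      proof (cases "s < p")
        case True
        then show ?thesis using E Xrel by (simp add: X'_def)
      next
        case False
        then have "s = p" using \<open>s < Suc p\<close> by simp
        then show ?thesis using E False y(2) by (simp add: X'_def)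
      qed
    qed
    moreover have "\<forall>z. (\<forall>s<Suc p. z s \<in> K) \<longrightarrow> (\<forall>j<Suc n. (\<Sum>s<Suc p. X' s j * z s) = 0) \<longrightarrow> (\<forall>s<Suc p. z s = 0)"
    proof (intro allI impI)
      fix z s assume zK: "\<forall>s<Suc p. z s \<in> K" and eq: "\<forall>j<Suc n. (\<Sum>s<Suc p. X' s j * z s) = 0"
        and s: "s < Suc p"
      have "(\<Sum>s<Suc p. X' s n * z s) = z p"
        by (simp add: X'_def)
      then have zp: "z p = 0" using eq by simp
      have "\<forall>j<n. (\<Sum>s<p. X s j * z s) = 0"
      proof (intro allI impI)
        fix j assume j: "j < n"
        have "(\<Sum>s<Suc p. X' s j * z s) = (\<Sum>s<p. X s j * z s) + (- y j) * z p"
          using j by (simp add: X'_def)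
        then show "(\<Sum>s<p. X s j * z s) = 0" using eq j zp by simp
      qed
      then have "\<forall>s<p. z s = 0" using Xind zK by simp
      then show "z s = 0" using zp s less_Suc_eq by auto
    qed
    moreover have "Suc p \<le> Suc n" using p by simp
    moreover have "Suc n - Suc p = n - p" by simp
    ultimately show ?thesis using uV' uind by (intro exI[of _ "Suc p"] exI[of _ X'] exI[of _ u]) simp
  next
    case False
    define X' where "X' s j = (if j < n then X s j else 0)" for s j
    define u' where "u' = u(n - p := v n)"
    have "\<forall>s<p. \<forall>j. X' s j \<in> K" using XK K by (auto simp: X'_def subdiv_def)
    moreover have "\<forall>s<p. (\<Sum>j<Suc n. v j * X' s j) = 0" using Xrel by (simp add: X'_def)
    moreover have "\<forall>z. (\<forall>s<p. z s \<in> K) \<longrightarrow> (\<forall>j<Suc n. (\<Sum>s<p. X' s j * z s) = 0) \<longrightarrow> (\<forall>s<p. z s = 0)"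
    proof (intro allI impI)
      fix z s assume zK: "\<forall>s<p. z s \<in> K" and eq: "\<forall>j<Suc n. (\<Sum>s<p. X' s j * z s) = 0" and s: "s < p"
      have "\<forall>j<n. (\<Sum>s<p. X s j * z s) = 0"
      proof (intro allI impI)
        fix j assume j: "j < n"
        then have "(\<Sum>s<p. X' s j * z s) = 0" using eq by simp
        then show "(\<Sum>s<p. X s j * z s) = 0" using j by (simp add: X'_def)
      qed
      then show "z s = 0" using Xind zK s by blast
    qed
    moreover have "\<forall>s<Suc n - p. u' s \<in> rspan K v (Suc n)"
    proof (intro allI impI)
      fix s assume s: "s < Suc n - p"
      show "u' s \<in> rspan K v (Suc n)"
      proof (cases "s = n - p")
        case True
        then show ?thesis using rspan_gen[OF K, of n "Suc n" v] by (simp add: u'_def)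
      next
        case False
        then have "s < n - p" using s p by linarith
        then show ?thesis using uV' False by (simp add: u'_def)
      qed
    qed
    moreover have "rindep K u' (Suc n - p)"
      unfolding rindep_def
    proof (intro allI impI)
      fix z s assume zK: "\<forall>j<Suc n - p. z j \<in> K" and eq: "(\<Sum>j<Suc n - p. u' j * z j) = 0"
        and s: "s < Suc n - p"
      have sum_eq: "(\<Sum>j<Suc n - p. u' j * z j) = (\<Sum>j<n - p. u j * z j) + v n * z (n - p)"
        using p by (simp add: u'_def Suc_diff_le)
      have zl: "z (n - p) = 0"
      proof (rule ccontr)
        assume nz: "z (n - p) \<noteq> 0"
        have "v n = (\<Sum>j<n - p. u j * (- (z j * inverse (z (n - p)))))"
        proof -
          have "(\<Sum>j<n - p. u j * z j) + v n * z (n - p) = 0" using eq sum_eq by simp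
          then have "v n * z (n - p) = - (\<Sum>j<n - p. u j * z j)"
            by (metis add.commute eq_neg_iff_add_eq_0)
          then have "v n = - (\<Sum>j<n - p. u j * z j) * inverse (z (n - p))"
            using nz by (metis mult.assoc right_inverse mult.right_neutral)
          then show ?thesis by (simp add: sum_distrib_right mult.assoc sum_negf)
        qed
        moreover have "(\<Sum>j<n - p. u j * (- (z j * inverse (z (n - p))))) \<in> rspan K v n"
          using uV zK K p by (intro rspan_comb) (auto simp: subdiv_def Suc_diff_le)
        ultimately show False using False by simp
      qed
      then have "(\<Sum>j<n - p. u j * z j) = 0" using eq sum_eq by simp
      then have "\<forall>j<n-p. z j = 0" using uind zK p unfolding rindep_def by (auto simp: Suc_diff_le)
      then show "z s = 0" using zl s p by (auto simp: Suc_diff_le less_Suc_eq)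
    qed
    moreover have "p \<le> Suc n" using p by simp
    ultimately show ?thesis by (intro exI[of _ p] exI[of _ X'] exI[of _ u']) simp
  qed
qed




definition opf :: "('a::division_ring \<Rightarrow> 'a) \<Rightarrow> ('a \<Rightarrow> 'a) \<Rightarrow> (nat \<Rightarrow> 'a) \<Rightarrow> nat \<Rightarrow> 'a \<Rightarrow> 'a \<Rightarrow> 'a" where
  "opf \<sigma> \<delta> f m a \<beta> = (\<Sum>t<m. f t * (Dop \<sigma> \<delta> a ^^ t) \<beta>)"

locale skew =
  fixes \<sigma> \<delta> :: "'a::division_ring \<Rightarrow> 'a"
  assumes endo: "ring_endo \<sigma>" and der: "sigma_derivation \<sigma> \<delta>"
begin

abbreviation "D \<equiv> Dop \<sigma> \<delta>"
abbreviation "P \<equiv> opf \<sigma> \<delta>"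

lemma s_add: "\<sigma> (x + y) = \<sigma> x + \<sigma> y" using endo by (simp add: ring_endo_def)
lemma s_mult: "\<sigma> (x * y) = \<sigma> x * \<sigma> y" using endo by (simp add: ring_endo_def)
lemma s_one: "\<sigma> 1 = 1" using endo by (simp add: ring_endo_def)
lemma s_zero: "\<sigma> 0 = 0" using s_add[of 0 0] by simp
lemma s_minus: "\<sigma> (- x) = - \<sigma> x"
proof -
  have "\<sigma> x + \<sigma> (-x) = 0" using s_add[of x "-x"] s_zero by simp
  then show ?thesis by (metis add.commute eq_neg_iff_add_eq_0)
qed
lemma s_nz: "x \<noteq> 0 \<Longrightarrow> \<sigma> x \<noteq> 0"
  using s_mult[of x "inverse x"] s_one by auto
lemma d_add: "\<delta> (x + y) = \<delta> x + \<delta> y" using der by (simp add: sigma_derivation_def)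
lemma d_mult: "\<delta> (x * y) = \<sigma> x * \<delta> y + \<delta> x * y" using der by (simp add: sigma_derivation_def)
lemma d_zero: "\<delta> 0 = 0" using d_add[of 0 0] by simp
lemma d_minus: "\<delta> (- x) = - \<delta> x"
proof -
  have "\<delta> x + \<delta> (-x) = 0" using d_add[of x "-x"] d_zero by simp
  then show ?thesis by (metis add.commute eq_neg_iff_add_eq_0)
qed
lemma d_one: "\<delta> 1 = 0" using d_mult[of 1 1] s_one by simp

lemma D_add: "D a (x + y) = D a x + D a y"
  by (simp add: Dop_def s_add d_add algebra_simps)
lemma D_zero: "D a 0 = 0" by (simp add: Dop_def s_zero d_zero)
lemma D_minus: "D a (- x) = - D a x" by (simp add: Dop_def s_minus d_minus)
lemma D_diff: "D a (x - y) = D a x - D a y"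
  by (metis D_add D_minus diff_conv_add_uminus)
lemma D_one: "D a 1 = a" by (simp add: Dop_def s_one d_one)
lemma D_lmul: "D a (c * x) = \<sigma> c * D a x + \<delta> c * x"
  by (simp add: Dop_def s_mult d_mult algebra_simps)
lemma D_rmul: "l \<in> Kset \<sigma> \<delta> a \<Longrightarrow> D a (x * l) = D a x * l"
  using D_lmul[of a x l] by (simp add: Kset_def Dop_def algebra_simps)

lemma Kset_sub: "subdiv (Kset \<sigma> \<delta> a)"
  unfolding subdiv_def
proof (intro conjI ballI)
  show "0 \<in> Kset \<sigma> \<delta> a" by (simp add: Kset_def D_zero)
  show "1 \<in> Kset \<sigma> \<delta> a" by (simp add: Kset_def D_one)
  fix x y assume x: "x \<in> Kset \<sigma> \<delta> a"
  show "- x \<in> Kset \<sigma> \<delta> a" using x by (simp add: Kset_def D_minus)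
  { assume y: "y \<in> Kset \<sigma> \<delta> a"
    show "x + y \<in> Kset \<sigma> \<delta> a" using x y by (simp add: Kset_def D_add distrib_left)
    show "x * y \<in> Kset \<sigma> \<delta> a" using x y D_rmul[OF y, of x] by (simp add: Kset_def mult.assoc) }
  show "inverse x \<in> Kset \<sigma> \<delta> a"
  proof (cases "x = 0")
    case True then show ?thesis using \<open>0 \<in> Kset \<sigma> \<delta> a\<close> by simp
  next
    case False
    have dx: "\<delta> x = a * x - \<sigma> x * a" using x by (simp add: Kset_def Dop_def algebra_simps)
    have "a = D a (x * inverse x)" using False by (simp add: D_one)
    also have "\<dots> = \<sigma> x * D a (inverse x) + \<delta> x * inverse x" by (rule D_lmul)
    finally have "\<sigma> x * D a (inverse x) = a - (a * x - \<sigma> x * a) * inverse x" using dx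
      by (simp add: algebra_simps)
    also have "\<dots> = \<sigma> x * a * inverse x" using False by (simp add: algebra_simps)
    finally have "\<sigma> x * D a (inverse x) = \<sigma> x * (a * inverse x)" by (simp add: mult.assoc)
    then have "D a (inverse x) = a * inverse x" using s_nz[OF False] by simp
    then show ?thesis by (simp add: Kset_def)
  qed
qed

lemma Dp_add: "(D a ^^ t) (x + y) = (D a ^^ t) x + (D a ^^ t) y"
  by (induction t) (simp_all add: D_add)
lemma Dp_zero: "(D a ^^ t) 0 = 0"
  by (induction t) (simp_all add: D_zero)
lemma Dp_diff: "(D a ^^ t) (x - y) = (D a ^^ t) x - (D a ^^ t) y"
  by (induction t) (simp_all add: D_diff)
lemma Dp_sum: "(D a ^^ t) (sum f A) = (\<Sum>j\<in>A. (D a ^^ t) (f j))"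
  by (induction A rule: infinite_finite_induct) (simp_all add: Dp_zero Dp_add)
lemma Dp_rmul: "l \<in> Kset \<sigma> \<delta> a \<Longrightarrow> (D a ^^ t) (x * l) = (D a ^^ t) x * l"
  by (induction t) (simp_all add: D_rmul)

lemma P_add: "P f m a (x + y) = P f m a x + P f m a y"
  by (simp add: opf_def Dp_add distrib_left sum.distrib)
lemma P_zero: "P f m a 0 = 0"
  by (simp add: opf_def Dp_zero)
lemma P_sum: "P f m a (sum g A) = (\<Sum>j\<in>A. P f m a (g j))"
  by (induction A rule: infinite_finite_induct) (simp_all add: P_zero P_add)
lemma P_rmul: "l \<in> Kset \<sigma> \<delta> a \<Longrightarrow> P f m a (x * l) = P f m a x * l"
  by (simp add: opf_def Dp_rmul sum_distrib_right mult.assoc)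
lemma P_comb: "(\<forall>j\<in>A. y j \<in> Kset \<sigma> \<delta> a) \<Longrightarrow> P f m a (\<Sum>j\<in>A. x j * y j) = (\<Sum>j\<in>A. P f m a (x j) * y j)"
  by (simp add: P_sum P_rmul)

lemma comm: "\<exists>e. \<forall>a \<beta>. (D a ^^ t) (c * \<beta>) = (\<Sum>s<Suc t. e s * (D a ^^ s) \<beta>)"
proof (induction t)
  case 0
  show ?case by (intro exI[of _ "\<lambda>_. c"]) simp
next
  case (Suc t)
  then obtain e where e: "\<forall>a \<beta>. (D a ^^ t) (c * \<beta>) = (\<Sum>s<Suc t. e s * (D a ^^ s) \<beta>)" by blast
  define e' where "e' s = (if s = 0 then 0 else \<sigma> (e (s - 1))) + (if s < Suc t then \<delta> (e s) else 0)" for s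
  show ?case
  proof (intro exI[of _ e'] allI)
    fix a \<beta>
    have "(D a ^^ Suc t) (c * \<beta>) = D a (\<Sum>s<Suc t. e s * (D a ^^ s) \<beta>)" using e by simp
    also have "\<dots> = (\<Sum>s<Suc t. \<sigma> (e s) * (D a ^^ Suc s) \<beta>) + (\<Sum>s<Suc t. \<delta> (e s) * (D a ^^ s) \<beta>)"
    proof -
      have "D a (\<Sum>s<Suc t. e s * (D a ^^ s) \<beta>) = (\<Sum>s<Suc t. D a (e s * (D a ^^ s) \<beta>))"
        by (induction t) (simp_all add: D_add)
      then show ?thesis by (simp add: D_lmul sum.distrib)
    qed
    also have "(\<Sum>s<Suc t. \<sigma> (e s) * (D a ^^ Suc s) \<beta>) =
        (\<Sum>s<Suc (Suc t). (if s = 0 then 0 else \<sigma> (e (s - 1))) * (D a ^^ s) \<beta>)"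
      by (subst sum.lessThan_Suc_shift) simp
    also have "(\<Sum>s<Suc t. \<delta> (e s) * (D a ^^ s) \<beta>) =
        (\<Sum>s<Suc (Suc t). (if s < Suc t then \<delta> (e s) else 0) * (D a ^^ s) \<beta>)"
      by simp
    finally show "(D a ^^ Suc t) (c * \<beta>) = (\<Sum>s<Suc (Suc t). e' s * (D a ^^ s) \<beta>)"
      by (simp add: e'_def distrib_right sum.distrib)
  qed
qed

lemma division: "\<exists>q r. (0 < n \<longrightarrow> q (n - 1) = f n) \<and>
   (\<forall>a \<beta>. P f (Suc n) a \<beta> = P q n a (D a \<beta> - b * \<beta>) + r * \<beta>)"
proof (induction n arbitrary: f)
  case 0
  show ?case by (intro exI[of _ "\<lambda>_. 0"] exI[of _ "f 0"]) (simp add: opf_def)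
next
  case (Suc n)
  obtain e where e: "\<forall>a \<beta>. (D a ^^ n) (b * \<beta>) = (\<Sum>s<Suc n. e s * (D a ^^ s) \<beta>)"
    using comm by blast
  define f' where "f' s = f s + f (Suc n) * e s" for s
  from Suc.IH[of f'] obtain q r where
    qr: "\<forall>a \<beta>. P f' (Suc n) a \<beta> = P q n a (D a \<beta> - b * \<beta>) + r * \<beta>" by blast
  define q' where "q' = q(n := f (Suc n))"
  show ?case
  proof (intro exI[of _ q'] exI[of _ r] conjI allI impI)
    show "q' (Suc n - 1) = f (Suc n)" by (simp add: q'_def)
    fix a \<beta>
    have q'eq: "P q' (Suc n) a y = P q n a y + f (Suc n) * (D a ^^ n) y" for y
      by (simp add: opf_def q'_def)
    have top: "(D a ^^ Suc n) \<beta> = (D a ^^ n) (D a \<beta> - b * \<beta>) + (\<Sum>s<Suc n. e s * (D a ^^ s) \<beta>)"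
      using e by (simp add: funpow_swap1 Dp_diff)
    have f'eq: "P f' (Suc n) a \<beta> = P f (Suc n) a \<beta> + f (Suc n) * (\<Sum>s<Suc n. e s * (D a ^^ s) \<beta>)"
      by (simp add: opf_def f'_def distrib_right sum.distrib sum_distrib_left mult.assoc del: sum.lessThan_Suc)
    have "P f (Suc (Suc n)) a \<beta> = P f (Suc n) a \<beta> + f (Suc n) * (D a ^^ Suc n) \<beta>"
      by (simp add: opf_def)
    also have "\<dots> = P f' (Suc n) a \<beta> + f (Suc n) * (D a ^^ n) (D a \<beta> - b * \<beta>)"
      unfolding top f'eq distrib_left by (simp only: add.commute add.left_commute)
    also have "\<dots> = P q' (Suc n) a (D a \<beta> - b * \<beta>) + r * \<beta>"
      by (simp add: qr q'eq)
    finally show "P f (Suc (Suc n)) a \<beta> = P q' (Suc n) a (D a \<beta> - b * \<beta>) + r * \<beta>" .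
  qed
qed

end



context skew begin

lemma cancel1: "(x::'a) \<noteq> 0 \<Longrightarrow> x * (inverse x * y) = y"
  by (simp add: mult.assoc[symmetric])

lemma D_conj: "\<gamma> \<noteq> 0 \<Longrightarrow> D a (c * \<gamma>) = D (D a \<gamma> * inverse \<gamma>) c * \<gamma>"
proof -
  assume g: "\<gamma> \<noteq> 0"
  have "D (D a \<gamma> * inverse \<gamma>) c * \<gamma> = \<sigma> c * (D a \<gamma> * inverse \<gamma> * \<gamma>) + \<delta> c * \<gamma>"
    by (simp add: Dop_def algebra_simps)
  also have "D a \<gamma> * inverse \<gamma> * \<gamma> = D a \<gamma>" using g by (simp add: mult.assoc)
  finally show ?thesis by (simp add: D_lmul)
qed

lemma conj_trans: "conjugate \<sigma> \<delta> a b \<Longrightarrow> conjugate \<sigma> \<delta> b c \<Longrightarrow> conjugate \<sigma> \<delta> a c"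
proof -
  assume "conjugate \<sigma> \<delta> a b" "conjugate \<sigma> \<delta> b c"
  then obtain \<gamma> \<mu> where g: "\<gamma> \<noteq> 0" "b = D a \<gamma> * inverse \<gamma>" and m: "\<mu> \<noteq> 0" "c = D b \<mu> * inverse \<mu>"
    unfolding conjugate_def by blast
  have "D a (\<mu> * \<gamma>) = D b \<mu> * \<gamma>" unfolding g(2) by (rule D_conj[OF g(1)])
  then have "D a (\<mu> * \<gamma>) * inverse (\<mu> * \<gamma>) = D b \<mu> * \<gamma> * (inverse \<gamma> * inverse \<mu>)"
    using g m by (simp add: nonzero_inverse_mult_distrib)
  also have "\<dots> = D b \<mu> * (\<gamma> * (inverse \<gamma> * inverse \<mu>))" by (simp add: mult.assoc)
  also have "\<dots> = c" using g m by (simp add: cancel1)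
  finally show ?thesis unfolding conjugate_def using g m by (intro exI[of _ "\<mu> * \<gamma>"]) simp
qed

lemma conj_sym: "conjugate \<sigma> \<delta> a b \<Longrightarrow> conjugate \<sigma> \<delta> b a"
proof -
  assume "conjugate \<sigma> \<delta> a b"
  then obtain \<gamma> where g: "\<gamma> \<noteq> 0" "b = D a \<gamma> * inverse \<gamma>" unfolding conjugate_def by blast
  have "a = D a (inverse \<gamma> * \<gamma>)" using g by (simp add: D_one)
  also have "\<dots> = D b (inverse \<gamma>) * \<gamma>" unfolding g(2) by (rule D_conj[OF g(1)])
  finally have "a = D b (inverse \<gamma>) * inverse (inverse \<gamma>)" by simp
  then show ?thesis unfolding conjugate_def using g by (intro exI[of _ "inverse \<gamma>"]) simp
qed

lemma D_comb: "(\<forall>j\<in>A. y j \<in> Kset \<sigma> \<delta> a) \<Longrightarrow> D a (\<Sum>j\<in>A. x j * y j) = (\<Sum>j\<in>A. D a (x j) * y j)"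
  by (induction A rule: infinite_finite_induct) (simp_all add: D_add D_zero D_rmul)

lemma core:
  fixes l :: nat and a :: "nat \<Rightarrow> 'a" and mm :: "nat \<Rightarrow> nat" and m :: nat
  assumes nc: "\<forall>i<l. \<forall>j<l. i \<noteq> j \<longrightarrow> \<not> conjugate \<sigma> \<delta> (a i) (a j)"
  shows "f (m - 1) \<noteq> 0 \<Longrightarrow> 0 < m \<Longrightarrow> (\<forall>i<l. rindep (Kset \<sigma> \<delta> (a i)) (g i) (mm i)) \<Longrightarrow>
    (\<forall>i<l. \<forall>j<mm i. P f m (a i) (g i j) = 0) \<Longrightarrow> (\<Sum>i<l. mm i) < m"
proof (induction m arbitrary: f g mm)
  case 0 then show ?case by simp
next
  case (Suc m)
  note ind = Suc.prems(3) and ker = Suc.prems(4)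
  show ?case
  proof (cases "(\<Sum>i<l. mm i) = 0")
    case True then show ?thesis by simp
  next
    case False
    then obtain i0 where i0: "i0 < l" "0 < mm i0" by (metis lessThan_iff neq0_conv sum.neutral)
    define j0 where "j0 = mm i0 - 1"
    define \<gamma> where "\<gamma> = g i0 j0"
    define K0 where "K0 = Kset \<sigma> \<delta> (a i0)"
    have K0: "subdiv K0" unfolding K0_def by (rule Kset_sub)
    have j0: "j0 < mm i0" "Suc j0 = mm i0" using i0 by (auto simp: j0_def)
    have gnz: "\<gamma> \<noteq> 0"
    proof
      assume "\<gamma> = 0"
      have "(\<Sum>j<mm i0. g i0 j * (if j = j0 then 1 else 0)) = g i0 j0"
        using j0 by (simp add: if_distrib[of "\<lambda>x. _ * x"] sum.delta' cong: if_cong)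
      then have S0: "(\<Sum>j<mm i0. g i0 j * (\<lambda>j. if j = j0 then 1 else 0) j) = 0" using \<open>\<gamma> = 0\<close> by (simp add: \<gamma>_def)
      have K1: "(\<lambda>j. if j = j0 then 1 else 0) j \<in> K0" if "j < mm i0" for j using K0 by (auto simp: subdiv_def)
      have RI: "rindep K0 (g i0) (mm i0)" using ind i0 by (simp add: K0_def)
      have "(\<lambda>j. if j = j0 then 1 else (0::'a)) j0 = 0"
        by (rule RI[unfolded rindep_def, rule_format, OF K1 S0 j0(1)])
      then show False by simp
    qed
    define b where "b = D (a i0) \<gamma> * inverse \<gamma>"
    have bg: "b * \<gamma> = D (a i0) \<gamma>" using gnz by (simp add: b_def mult.assoc)
    obtain q r where qtop: "0 < m \<longrightarrow> q (m - 1) = f m"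
      and qr: "\<forall>a \<beta>. P f (Suc m) a \<beta> = P q m a (D a \<beta> - b * \<beta>) + r * \<beta>"
      using division[of m f b] by (elim exE conjE) 
    have "P f (Suc m) (a i0) \<gamma> = 0" using ker i0 j0 by (simp add: \<gamma>_def)
    then have "r * \<gamma> = 0" using qr bg by (simp add: P_zero)
    then have r0: "r = 0" using gnz by simp
    have m0: "0 < m"
    proof (rule ccontr)
      assume "\<not> 0 < m"
      then have "m = 0" by simp
      then have "P f (Suc m) (a i0) \<gamma> = f 0 * \<gamma>" by (simp add: opf_def)
      then show False using \<open>P f (Suc m) (a i0) \<gamma> = 0\<close> Suc.prems(1) gnz \<open>m = 0\<close> by simp
    qed
    have qnz: "q (m - 1) \<noteq> 0" using qtop m0 Suc.prems(1) by simp
    define g' where "g' i j = D (a i) (g i j) - b * g i j" for i j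
    define mm' where "mm' = mm(i0 := j0)"
    have ker': "\<forall>i<l. \<forall>j<mm' i. P q m (a i) (g' i j) = 0"
    proof (intro allI impI)
      fix i j assume "i < l" "j < mm' i"
      then have "j < mm i" using j0 by (auto simp: mm'_def split: if_splits)
      then have "P f (Suc m) (a i) (g i j) = 0" using ker \<open>i < l\<close> by simp
      then show "P q m (a i) (g' i j) = 0" using qr r0 by (simp add: g'_def)
    qed
    have ind': "\<forall>i<l. rindep (Kset \<sigma> \<delta> (a i)) (g' i) (mm' i)"
    proof (intro allI impI)
      fix i assume il: "i < l"
      show "rindep (Kset \<sigma> \<delta> (a i)) (g' i) (mm' i)"
        unfolding rindep_def
      proof (intro allI impI)
        fix x j assume xK: "\<forall>j<mm' i. x j \<in> Kset \<sigma> \<delta> (a i)"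
          and eq: "(\<Sum>j<mm' i. g' i j * x j) = 0" and j: "j < mm' i"
        define w where "w = (\<Sum>j<mm' i. g i j * x j)"
        have "D (a i) w - b * w = (\<Sum>j<mm' i. g' i j * x j)"
          unfolding w_def g'_def using xK
          by (simp add: D_comb sum_distrib_left sum_subtractf algebra_simps)
        then have Dw: "D (a i) w = b * w" using eq by simp
        show "x j = 0"
        proof (cases "i = i0")
          case False
          then have mmi: "mm' i = mm i" by (simp add: mm'_def)
          have "w = 0"
          proof (rule ccontr)
            assume wnz: "w \<noteq> 0"
            have "b = D (a i) w * inverse w" using Dw wnz by (simp add: mult.assoc)
            then have c1: "conjugate \<sigma> \<delta> (a i) b" unfolding conjugate_def using wnz by blast
            have c2: "conjugate \<sigma> \<delta> (a i0) b" unfolding conjugate_def b_def using gnz by blast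
            have "conjugate \<sigma> \<delta> (a i) (a i0)" using conj_trans[OF c1 conj_sym[OF c2]] .
            then show False using nc il i0 False by blast
          qed
          then show ?thesis using ind il xK j unfolding rindep_def w_def mmi by blast
        next
          case True
          then have mmi: "mm' i = j0" by (simp add: mm'_def)
          define lam where "lam = inverse \<gamma> * w"
          have wl: "w = \<gamma> * lam" using gnz by (simp add: lam_def mult.assoc[symmetric])
          have "\<sigma> \<gamma> * D (a i0) lam + \<delta> \<gamma> * lam = b * \<gamma> * lam"
            using Dw True wl D_lmul[of "a i0" \<gamma> lam] by (simp add: mult.assoc)
          also have "\<dots> = \<sigma> \<gamma> * (a i0 * lam) + \<delta> \<gamma> * lam"
            by (simp add: bg Dop_def algebra_simps)
          finally have "\<sigma> \<gamma> * D (a i0) lam = \<sigma> \<gamma> * (a i0 * lam)" by simp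
          then have lK: "lam \<in> K0" using s_nz[OF gnz] by (simp add: K0_def Kset_def)
          define x' where "x' = x(j0 := - lam)"
          have "(\<Sum>j<mm i0. g i0 j * x' j) = (\<Sum>j<j0. g i0 j * x' j) + \<gamma> * (- lam)"
            using j0(2)[symmetric] by (simp add: x'_def \<gamma>_def)
          also have "(\<Sum>j<j0. g i0 j * x' j) = w"
            unfolding w_def mmi x'_def using True by (intro sum.cong) auto
          finally have "(\<Sum>j<mm i0. g i0 j * x' j) = 0" using wl by simp
          moreover have "\<forall>j<mm i0. x' j \<in> K0"
            using xK lK K0 True mmi j0 by (auto simp: x'_def K0_def subdiv_def less_Suc_eq)
          ultimately have X0: "\<forall>j<mm i0. x' j = 0" using ind i0 unfolding rindep_def K0_def by blast
          have "j < mm i0" "j \<noteq> j0" using j True mmi j0 by auto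
          then have "x' j = x j" "x' j = 0" using X0 by (auto simp: x'_def)
          then show ?thesis by simp
        qed
      qed
    qed
    have "(\<Sum>i<l. mm' i) < m" using Suc.IH[OF _ m0 ind' ker'] qnz by simp
    moreover have "(\<Sum>i<l. mm i) = Suc (\<Sum>i<l. mm' i)"
    proof -
      have "(\<Sum>i<l. mm i) = mm i0 + (\<Sum>i\<in>{..<l} - {i0}. mm i)" using i0 by (intro sum.remove) auto
      moreover have "(\<Sum>i<l. mm' i) = mm' i0 + (\<Sum>i\<in>{..<l} - {i0}. mm' i)" using i0 by (intro sum.remove) auto
      moreover have "(\<Sum>i\<in>{..<l} - {i0}. mm' i) = (\<Sum>i\<in>{..<l} - {i0}. mm i)"
        by (intro sum.cong) (auto simp: mm'_def)
      ultimately show ?thesis using j0 by (simp add: mm'_def)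
    qed
    ultimately show ?thesis by simp
  qed
qed

end



lemma sum_shift_zero:
  fixes f :: "nat \<Rightarrow> 'b::comm_monoid_add"
  assumes "s \<le> n" "\<forall>j<s. f j = 0"
  shows "(\<Sum>j<n. f j) = (\<Sum>j<n-s. f (j + s))"
proof -
  have "(\<Sum>j<n. f j) = (\<Sum>j\<in>{0..<s}. f j) + (\<Sum>j\<in>{s..<n}. f j)"
    using assms(1) by (simp add: sum.atLeastLessThan_concat atLeast0LessThan[symmetric])
  also have "(\<Sum>j\<in>{0..<s}. f j) = 0" using assms(2) by simp
  also have "(\<Sum>j\<in>{s..<n}. f j) = (\<Sum>j\<in>{0..<n-s}. f (s + j))"
    by (subst sum.atLeastLessThan_shift_0) (simp add: comp_def)
  finally show ?thesis by (simp add: atLeast0LessThan add.commute)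
qed

lemma split_sum_nat:
  fixes nn :: "nat \<Rightarrow> nat"
  shows "N \<le> (\<Sum>i<l. nn i) \<Longrightarrow> \<exists>s. (\<forall>i. s i \<le> nn i) \<and> (\<Sum>i<l. s i) = N"
proof (induction l arbitrary: N)
  case 0 then show ?case by (intro exI[of _ "\<lambda>_. 0"]) simp
next
  case (Suc l)
  define N' where "N' = min N (\<Sum>i<l. nn i)"
  obtain s where s: "\<forall>i. s i \<le> nn i" "(\<Sum>i<l. s i) = N'"
    using Suc.IH[of N'] by (auto simp: N'_def)
  define s' where "s' = s(l := N - N')"
  have "N - N' \<le> nn l" using Suc.prems by (auto simp: N'_def)
  then have "\<forall>i. s' i \<le> nn i" using s by (simp add: s'_def)
  moreover have "(\<Sum>i<Suc l. s' i) = N"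
  proof -
    have "(\<Sum>i<l. s' i) = (\<Sum>i<l. s i)" by (intro sum.cong) (auto simp: s'_def)
    then show ?thesis using s by (simp add: s'_def N'_def)
  qed
  ultimately show ?case by blast
qed

lemma exists_top: "(\<exists>t<(k::nat). Q t) \<Longrightarrow> \<exists>m. 0 < m \<and> m \<le> k \<and> Q (m - 1) \<and> (\<forall>t. m \<le> t \<longrightarrow> t < k \<longrightarrow> \<not> Q t)"
proof (induction k)
  case 0 then show ?case by simp
next
  case (Suc k)
  show ?case
  proof (cases "Q k")
    case True then show ?thesis by (intro exI[of _ "Suc k"]) auto
  next
    case False
    then have "\<exists>t<k. Q t" using Suc.prems less_Suc_eq by auto
    then obtain m where "0 < m \<and> m \<le> k \<and> Q (m - 1) \<and> (\<forall>t. m \<le> t \<longrightarrow> t < k \<longrightarrow> \<not> Q t)"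
      using Suc.IH by blast
    then show ?thesis using False by (intro exI[of _ m]) (auto simp: less_Suc_eq)
  qed
qed

locale lrs = skew +
  fixes l :: nat and nn :: "nat \<Rightarrow> nat" and a :: "nat \<Rightarrow> 'a" and \<beta> :: "nat \<Rightarrow> nat \<Rightarrow> 'a"
    and k n :: nat
  assumes nc: "\<forall>i<l. \<forall>j<l. i \<noteq> j \<longrightarrow> \<not> conjugate \<sigma> \<delta> (a i) (a j)"
    and bind: "\<forall>i<l. rindep (Kset \<sigma> \<delta> (a i)) (\<beta> i) (nn i)"
    and n_def: "n = (\<Sum>i<l. nn i)"
    and k1: "1 \<le> k" and kn: "k \<le> n"
begin

definition cw :: "(nat \<Rightarrow> 'a) \<Rightarrow> nat \<Rightarrow> nat \<Rightarrow> 'a" where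
  "cw F = (\<lambda>i j. if i < l \<and> j < nn i then P F k (a i) (\<beta> i j) else 0)"

abbreviation "Kf \<equiv> (\<lambda>i. Kset \<sigma> \<delta> (a i))"

lemma code_eq: "LRS_code \<sigma> \<delta> l nn a \<beta> k = {cw F | F. True}"
  unfolding LRS_code_def cw_def opf_def ..

lemma P_trunc: "m \<le> k \<Longrightarrow> (\<forall>t. m \<le> t \<longrightarrow> t < k \<longrightarrow> F t = 0) \<Longrightarrow> P F k c x = P F m c x"
  unfolding opf_def by (intro sum.mono_neutral_cong_right) auto

lemma cw_lin: "(\<lambda>i j. \<Sum>t\<in>A. x t * cw (G t) i j) = cw (\<lambda>s. \<Sum>t\<in>A. x t * G t s)"
proof (intro ext)
  fix i j
  show "(\<Sum>t\<in>A. x t * cw (G t) i j) = cw (\<lambda>s. \<Sum>t\<in>A. x t * G t s) i j"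
  proof (cases "i < l \<and> j < nn i")
    case True
    have "(\<Sum>t\<in>A. x t * (\<Sum>s<k. G t s * (D (a i) ^^ s) (\<beta> i j))) =
        (\<Sum>s<k. (\<Sum>t\<in>A. x t * G t s) * (D (a i) ^^ s) (\<beta> i j))"
      by (simp add: sum_distrib_left sum_distrib_right mult.assoc) (rule sum.swap)
    then show ?thesis using True by (simp add: cw_def opf_def)
  qed (auto simp: cw_def)
qed

lemma cw_diff: "(\<lambda>i j. cw F i j - cw G i j) = cw (\<lambda>t. F t - G t)"
  by (intro ext) (simp add: cw_def opf_def algebra_simps sum_subtractf)

lemma cw_add: "(\<lambda>i j. cw F i j + cw G i j) = cw (\<lambda>t. F t + G t)"
  by (intro ext) (simp add: cw_def opf_def algebra_simps sum.distrib)

lemma cw_smul: "(\<lambda>i j. x * cw F i j) = cw (\<lambda>t. x * F t)"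
  by (intro ext) (simp add: cw_def opf_def algebra_simps sum_distrib_left)

lemma cw_zero: "cw (\<lambda>_. 0) = (\<lambda>i j. 0)"
  by (intro ext) (simp add: cw_def opf_def)

lemma cw_cong: "(\<forall>t<k. F t = G t) \<Longrightarrow> cw F = cw G"
  unfolding cw_def opf_def by (intro ext) (auto intro!: sum.cong)

lemma cw_inj: "cw F = (\<lambda>i j. 0) \<Longrightarrow> \<forall>t<k. F t = 0"
proof (rule ccontr)
  assume z: "cw F = (\<lambda>i j. 0)" and "\<not> (\<forall>t<k. F t = 0)"
  then obtain m where m: "0 < m" "m \<le> k" "F (m - 1) \<noteq> 0" "\<forall>t. m \<le> t \<longrightarrow> t < k \<longrightarrow> F t = 0"
    using exists_top[of k "\<lambda>t. F t \<noteq> 0"] by auto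
  have "\<forall>i<l. \<forall>j<nn i. P F m (a i) (\<beta> i j) = 0"
  proof (intro allI impI)
    fix i j assume "i < l" "j < nn i"
    then have "cw F i j = P F m (a i) (\<beta> i j)" using P_trunc[OF m(2) m(4)] by (simp add: cw_def)
    then show "P F m (a i) (\<beta> i j) = 0" using z by simp
  qed
  then have "(\<Sum>i<l. nn i) < m" using core[where f=F and m=m and g=\<beta> and mm=nn, OF nc m(3) m(1) bind] by blast
  then show False using m(2) kn n_def by simp
qed

lemma lower:
  assumes nz: "\<exists>t<k. F t \<noteq> 0"
  shows "n - k + 1 \<le> wtSR l nn Kf (cw F)"
proof -
  obtain m where m: "0 < m" "m \<le> k" "F (m - 1) \<noteq> 0" "\<forall>t. m \<le> t \<longrightarrow> t < k \<longrightarrow> F t = 0"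
    using exists_top[of k "\<lambda>t. F t \<noteq> 0"] nz by auto
  define v where "v i j = P F m (a i) (\<beta> i j)" for i j
  define Q where "Q i p X u \<longleftrightarrow> p \<le> nn i \<and> (\<forall>s<p. \<forall>j. X s j \<in> Kf i) \<and> (\<forall>s<p. (\<Sum>j<nn i. v i j * X s j) = 0) \<and>
    (\<forall>y. (\<forall>s<p. y s \<in> Kf i) \<longrightarrow> (\<forall>j<nn i. (\<Sum>s<p. X s j * y s) = 0) \<longrightarrow> (\<forall>s<p. y s = 0)) \<and>
    (\<forall>s<nn i-p. u s \<in> rspan (Kf i) (v i) (nn i)) \<and> rindep (Kf i) u (nn i-p)" for i p X u
  have "\<forall>i. \<exists>p X u. Q i p X u" unfolding Q_def by (intro allI, rule relations[OF Kset_sub])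
  then have "\<exists>p. \<forall>i. \<exists>X u. Q i (p i) X u" by (rule choice)
  then obtain p where "\<forall>i. \<exists>X u. Q i (p i) X u" by (elim exE)
  then have "\<exists>X. \<forall>i. \<exists>u. Q i (p i) (X i) u" by (rule choice)
  then obtain X where "\<forall>i. \<exists>u. Q i (p i) (X i) u" by (elim exE)
  then have "\<exists>u. \<forall>i. Q i (p i) (X i) (u i)" by (rule choice)
  then obtain u where pXu0: "\<forall>i. Q i (p i) (X i) (u i)" by (elim exE)
  then have pXu: "\<forall>i. p i \<le> nn i \<and> (\<forall>s<p i. \<forall>j. X i s j \<in> Kf i) \<and> (\<forall>s<p i. (\<Sum>j<nn i. v i j * X i s j) = 0) \<and>
    (\<forall>y. (\<forall>s<p i. y s \<in> Kf i) \<longrightarrow> (\<forall>j<nn i. (\<Sum>s<p i. X i s j * y s) = 0) \<longrightarrow> (\<forall>s<p i. y s = 0)) \<and>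
    (\<forall>s<nn i-p i. u i s \<in> rspan (Kf i) (v i) (nn i)) \<and> rindep (Kf i) (u i) (nn i-p i)"
    unfolding Q_def .
  define gam where "gam i s = (\<Sum>j<nn i. \<beta> i j * X i s j)" for i s
  have ker: "\<forall>i<l. \<forall>s<p i. P F m (a i) (gam i s) = 0"
  proof (intro allI impI)
    fix i s assume "i < l" "s < p i"
    then have XK: "\<forall>j\<in>{..<nn i}. X i s j \<in> Kf i" using pXu by blast
    have "P F m (a i) (gam i s) = (\<Sum>j<nn i. v i j * X i s j)"
      unfolding gam_def v_def by (rule P_comb[OF XK])
    then show "P F m (a i) (gam i s) = 0" using pXu \<open>s < p i\<close> by simp
  qed
  have gind: "\<forall>i<l. rindep (Kf i) (gam i) (p i)"
  proof (intro allI impI)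
    fix i assume il: "i < l"
    show "rindep (Kf i) (gam i) (p i)" unfolding rindep_def
    proof (intro allI impI)
      fix y s assume yK: "\<forall>s<p i. y s \<in> Kf i" and eq: "(\<Sum>s<p i. gam i s * y s) = 0" and s: "s < p i"
      define c where "c j = (\<Sum>s<p i. X i s j * y s)" for j
      have "(\<Sum>s<p i. gam i s * y s) = (\<Sum>j<nn i. \<beta> i j * c j)"
        unfolding gam_def c_def
        by (simp add: sum_distrib_left sum_distrib_right mult.assoc) (rule sum.swap)
      then have "(\<Sum>j<nn i. \<beta> i j * c j) = 0" using eq by simp
      moreover have "\<forall>j<nn i. c j \<in> Kf i"
        unfolding c_def using pXu yK Kset_sub[of "a i"]
        by (auto intro!: subdiv_sum simp: subdiv_def)
      ultimately have "\<forall>j<nn i. c j = 0" using bind il unfolding rindep_def by blast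
      then show "y s = 0" using pXu yK s unfolding c_def by blast
    qed
  qed
  have sp: "(\<Sum>i<l. p i) < m" using core[where f=F and m=m and g=gam and mm=p, OF nc m(3) m(1) gind ker] .
  have rd: "nn i - p i \<le> rdim (Kf i) (rspan (Kf i) (cw F i) (nn i))" if il: "i < l" for i
  proof -
    have "rspan (Kf i) (cw F i) (nn i) = rspan (Kf i) (v i) (nn i)"
      using il P_trunc[OF m(2) m(4)] by (intro rspan_cong) (simp add: cw_def v_def)
    then show ?thesis using rdim_facts(2)[OF Kset_sub[of "a i"] order_refl, where v="v i" and n="nn i" and q="nn i - p i" and u="u i"] pXu
      by simp
  qed
  have "(\<Sum>i<l. nn i - p i) \<le> wtSR l nn Kf (cw F)"
    unfolding wtSR_def using rd by (intro sum_mono) auto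
  moreover have "(\<Sum>i<l. nn i - p i) = n - (\<Sum>i<l. p i)"
    using pXu n_def by (simp add: sum_subtractf_nat)
  ultimately show ?thesis using sp m(2) kn k1 by linarith
qed

lemma achieve: "\<exists>F. (\<exists>t<k. F t \<noteq> 0) \<and> wtSR l nn Kf (cw F) \<le> n - k + 1"
proof -
  have "k - 1 \<le> (\<Sum>i<l. nn i)" using kn n_def by simp
  from split_sum_nat[where N="k - 1" and l=l and nn=nn, OF this]
  obtain s where s: "\<forall>i. s i \<le> nn i" "(\<Sum>i<l. s i) = k - 1" by blast
  define E where "E = Sigma {..<l} (\<lambda>i. {..<s i})"
  have cE: "card E < card {..<k}" using s k1 by (simp add: E_def)
  obtain F where F: "\<exists>t\<in>{..<k}. F t \<noteq> 0"
    "\<forall>e\<in>E. (\<Sum>t\<in>{..<k}. F t * (D (a (fst e)) ^^ t) (\<beta> (fst e) (snd e))) = 0"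
    using gauss_left[of E "{..<k}" "\<lambda>t e. (D (a (fst e)) ^^ t) (\<beta> (fst e) (snd e))"] cE
    by (auto simp: E_def)
  have rd: "rdim (Kf i) (rspan (Kf i) (cw F i) (nn i)) \<le> nn i - s i" if il: "i < l" for i
  proof -
    have z: "\<forall>j<s i. cw F i j = 0"
    proof (intro allI impI)
      fix j assume j: "j < s i"
      then have "(i, j) \<in> E" using il by (simp add: E_def)
      then show "cw F i j = 0" using F(2) j s(1)[rule_format, of i] il
        by (auto simp: cw_def opf_def)
    qed
    have "rspan (Kf i) (cw F i) (nn i) \<subseteq> rspan (Kf i) (\<lambda>j. cw F i (j + s i)) (nn i - s i)"
    proof
      fix w assume "w \<in> rspan (Kf i) (cw F i) (nn i)"
      then obtain x where x: "\<forall>j<nn i. x j \<in> Kf i" "w = (\<Sum>j<nn i. cw F i j * x j)"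
        unfolding rspan_def by auto
      have "w = (\<Sum>j<nn i - s i. cw F i (j + s i) * x (j + s i))"
        unfolding x(2) using z s(1) by (intro sum_shift_zero) auto
      moreover have "\<forall>j<nn i - s i. x (j + s i) \<in> Kf i" using x(1) by auto
      ultimately show "w \<in> rspan (Kf i) (\<lambda>j. cw F i (j + s i)) (nn i - s i)"
        unfolding rspan_def by (intro CollectI exI[of _ "\<lambda>j. x (j + s i)"]) simp
    qed
    then show ?thesis by (rule rdim_facts(1)[OF Kset_sub])
  qed
  have "wtSR l nn Kf (cw F) \<le> (\<Sum>i<l. nn i - s i)"
    unfolding wtSR_def using rd by (intro sum_mono) auto
  also have "\<dots> = n - (k - 1)" using s n_def by (simp add: sum_subtractf_nat)
  finally show ?thesis using F(1) k1 kn by (intro exI[of _ F]) auto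
qed

end



context lrs begin

lemma part1: "left_linear_code l nn (LRS_code \<sigma> \<delta> l nn a \<beta> k)"
  unfolding left_linear_code_def code_eq
proof (intro conjI ballI allI)
  fix c assume "c \<in> {cw F |F. True}"
  then show "in_space l nn c" by (auto simp: in_space_def cw_def)
next
  show "(\<lambda>i j. 0) \<in> {cw F |F. True}" using cw_zero by (metis (mono_tags, lifting) mem_Collect_eq)
next
  fix c d assume "c \<in> {cw F |F. True}" "d \<in> {cw F |F. True}"
  then obtain F G where "c = cw F" "d = cw G" by auto
  then show "(\<lambda>i j. c i j + d i j) \<in> {cw F |F. True}" using cw_add by auto
next
  fix x c assume "c \<in> {cw F |F. True}"
  then obtain F where "c = cw F" by auto
  then show "(\<lambda>i j. x * c i j) \<in> {cw F |F. True}" using cw_smul by auto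
qed

lemma part2: "ldim (LRS_code \<sigma> \<delta> l nn a \<beta> k) = k"
proof -
  let ?C = "{cw F |F. True}"
  let ?M = "{m. \<exists>v. (\<forall>t<m. v t \<in> ?C) \<and> lindep_vec v m}"
  have kM: "k \<in> ?M"
  proof -
    define v where "v t = cw (\<lambda>s. if s = t then 1 else 0)" for t
    have "\<forall>t<k. v t \<in> ?C" unfolding v_def by blast
    moreover have "lindep_vec v k"
      unfolding lindep_vec_def
    proof (intro allI impI)
      fix x t assume eq: "(\<lambda>i j. \<Sum>t<k. x t * v t i j) = (\<lambda>i j. 0)" and t: "t < k"
      have "(\<lambda>i j. \<Sum>t<k. x t * v t i j) = cw (\<lambda>s. \<Sum>t<k. x t * (if s = t then 1 else 0))"
        unfolding v_def by (rule cw_lin)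
      then have "cw (\<lambda>s. \<Sum>t<k. x t * (if s = t then 1 else 0)) = (\<lambda>i j. 0)" using eq by simp
      from cw_inj[OF this] have "\<forall>s<k. (\<Sum>t<k. x t * (if s = t then 1 else 0)) = 0" .
      then show "x t = 0" using t by (simp add: if_distrib[of "\<lambda>y. _ * y"] cong: if_cong)
    qed
    ultimately show ?thesis unfolding mem_Collect_eq by (intro exI[of _ v]) simp
  qed
  have bnd: "m \<le> k" if "m \<in> ?M" for m
  proof (rule ccontr)
    assume mk: "\<not> m \<le> k"
    from that obtain v where v: "\<forall>t<m. v t \<in> ?C" "lindep_vec v m" by blast
    have "\<forall>t. \<exists>G. t < m \<longrightarrow> v t = cw G" using v(1) by auto
    then have "\<exists>G. \<forall>t. t < m \<longrightarrow> v t = cw (G t)" by (rule choice)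
    then obtain G where G: "\<forall>t. t < m \<longrightarrow> v t = cw (G t)" by (elim exE)
    have "card {..<k} < card {..<m}" using mk by simp
    from gauss_left[OF _ _ this, of "\<lambda>t s. G t s"]
    obtain x where x: "\<exists>t\<in>{..<m}. x t \<noteq> 0" "\<forall>s\<in>{..<k}. (\<Sum>t\<in>{..<m}. x t * G t s) = 0" by auto
    have "(\<lambda>i j. \<Sum>t<m. x t * v t i j) = (\<lambda>i j. \<Sum>t<m. x t * cw (G t) i j)"
      using G by (intro ext sum.cong) auto
    also have "\<dots> = cw (\<lambda>s. \<Sum>t<m. x t * G t s)" by (rule cw_lin)
    also have "\<dots> = cw (\<lambda>_. 0)" using x(2) by (intro cw_cong) auto
    also have "\<dots> = (\<lambda>i j. 0)" by (rule cw_zero)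
    finally have "\<forall>t<m. x t = 0" using v(2) unfolding lindep_vec_def by (elim allE[of _ x] impE)
    then show False using x(1) by auto
  qed
  have fin: "finite ?M" using bnd by (meson finite_nat_set_iff_bounded_le)
  show ?thesis unfolding ldim_def code_eq
    using kM bnd fin by (intro Max_eqI) auto
qed

lemma part3: "dSR_code l nn Kf (LRS_code \<sigma> \<delta> l nn a \<beta> k) = n - k + 1"
  unfolding dSR_code_def code_eq
proof (rule cInf_eq_minimum)
  obtain F where F: "\<exists>t<k. F t \<noteq> 0" "wtSR l nn Kf (cw F) \<le> n - k + 1" using achieve by blast
  have w: "wtSR l nn Kf (cw F) = n - k + 1" using F lower[OF F(1)] by simp
  have ne: "cw F \<noteq> cw (\<lambda>_. 0)" using F(1) cw_inj cw_zero by metis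
  have "dSR l nn Kf (cw F) (cw (\<lambda>_. 0)) = n - k + 1"
    unfolding dSR_def cw_diff using w by simp
  then show "n - k + 1 \<in> {dSR l nn Kf c d |c d. c \<in> {cw F |F. True} \<and> d \<in> {cw F |F. True} \<and> c \<noteq> d}"
    using ne unfolding mem_Collect_eq by (intro exI[of _ "cw F"] exI[of _ "cw (\<lambda>_. 0)"]) auto
next
  fix y assume "y \<in> {dSR l nn Kf c d |c d. c \<in> {cw F |F. True} \<and> d \<in> {cw F |F. True} \<and> c \<noteq> d}"
  then obtain F G where y: "y = dSR l nn Kf (cw F) (cw G)" "cw F \<noteq> cw G" by blast
  have "\<exists>t<k. F t - G t \<noteq> 0"
  proof (rule ccontr)
    assume "\<not> (\<exists>t<k. F t - G t \<noteq> 0)"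
    then have "cw F = cw G" by (intro cw_cong) auto
    then show False using y(2) by simp
  qed
  from lower[OF this] show "n - k + 1 \<le> y" unfolding y(1) dSR_def cw_diff .
qed

end

theorem mainTheorem13:
  fixes \<sigma> \<delta> :: "'a::division_ring \<Rightarrow> 'a"
    and l :: nat and nn :: "nat \<Rightarrow> nat" and a :: "nat \<Rightarrow> 'a" and \<beta> :: "nat \<Rightarrow> nat \<Rightarrow> 'a"
    and k n :: nat
  assumes "ring_endo \<sigma>"
    and "sigma_derivation \<sigma> \<delta>"
    and "\<forall>i<l. \<forall>j<l. i \<noteq> j \<longrightarrow> \<not> conjugate \<sigma> \<delta> (a i) (a j)"
    and "\<forall>i<l. rindep (Kset \<sigma> \<delta> (a i)) (\<beta> i) (nn i)"
    and "n = (\<Sum>i<l. nn i)"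
    and "1 \<le> k" and "k \<le> n"
  shows "left_linear_code l nn (LRS_code \<sigma> \<delta> l nn a \<beta> k)
    \<and> ldim (LRS_code \<sigma> \<delta> l nn a \<beta> k) = k
    \<and> dSR_code l nn (\<lambda>i. Kset \<sigma> \<delta> (a i)) (LRS_code \<sigma> \<delta> l nn a \<beta> k) = n - k + 1"
proof -
  interpret L: lrs \<sigma> \<delta> l nn a \<beta> k n
    by unfold_locales (use assms in auto)
  show ?thesis using L.part1 L.part2 L.part3 by blast
qed



end
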